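(* Let $\boldsymbol Z$ be an integrable random vector in $\mathbb R^d$ whose distribution is invariant under all orthogonal transformations, and let $W$ be a discrete random variable jointly distributed with $\boldsymbol Z$. Then for every $w$ in the support of $W$ and every real $\theta$, $$\big\|\mathbb E(\boldsymbol Z\mathbf 1_{W=w})\big\|^2\le\big[\theta\,\mathbb P(W=w)+\mathbb E(Z_1-\theta)_+\big]^2,$$ where $Z_1$ is the first coordinate of $\boldsymbol Z$ and $x_+=\max(x,0)$. *)

theory Defs
  imports "HOL-Probability.Probability"
begin

end

theory Submission
  imports Defs
begin

theorem mainTheorem13:
  fixes M :: "'a measure"
    and Z :: "'a \<Rightarrow> real ^ 'n"
    and W :: "'a \<Rightarrow> 'b"
    and i :: 'n
    and w :: 'b
    and \<theta> :: real
  assumes "prob_space M"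
    and "Z \<in> borel_measurable M"
    and "integrable M Z"
    and "\<And>f. orthogonal_transformation f \<Longrightarrow>
           distr M borel (\<lambda>x. f (Z x)) = distr M borel Z"
    and "W \<in> measurable M (count_space UNIV)"
    and "countable (W ` space M)"
    and "measure M {x \<in> space M. W x = w} > 0"
  shows "(norm (integral\<^sup>L M (\<lambda>x. indicator {y \<in> space M. W y = w} x *\<^sub>R Z x)))\<^sup>2
         \<le> (\<theta> * measure M {x \<in> space M. W x = w}
             + integral\<^sup>L M (\<lambda>x. max (Z x $ i - \<theta>) 0))\<^sup>2"
proof -
  interpret prob_space M by fact
  define A where "A = {y \<in> space M. W y = w}"
  have Ameas: "A \<in> sets M"
  proof -
    have "A = W -` {w} \<inter> space M" unfolding A_def by auto
    also have "\<dots> \<in> sets M" using assms(5) by (rule measurable_sets) auto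
    finally show ?thesis .
  qed
  define v where "v = integral\<^sup>L M (\<lambda>x. indicator A x *\<^sub>R Z x)"
  have intv: "integrable M (\<lambda>x. indicator A x *\<^sub>R Z x)"
    using integrable_mult_indicator[OF Ameas assms(3)] .
  have "norm v = norm (norm v *\<^sub>R (axis i 1 :: real ^ 'n))" by simp
  then obtain g :: "real^'n \<Rightarrow> real^'n" where g: "orthogonal_transformation g" "g v = norm v *\<^sub>R axis i 1"
    by (rule orthogonal_transformation_exists) blast
  have lin: "linear g" using g(1) orthogonal_transformation_linear by blast
  have bl: "bounded_linear g" using lin by (simp add: linear_conv_bounded_linear)
  define L where "L = (\<lambda>y. g y $ i)"
  have blL: "bounded_linear L" unfolding L_def
    using bounded_linear_compose[OF bounded_linear_vec_nth bl] by simp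
  have nv: "norm v = L v" unfolding L_def using g(2) by (simp add: axis_def)
  also have "\<dots> = integral\<^sup>L M (\<lambda>x. L (indicator A x *\<^sub>R Z x))"
    unfolding v_def using integral_bounded_linear[OF blL intv] by simp
  also have "\<dots> = integral\<^sup>L M (\<lambda>x. indicator A x * L (Z x))"
    using linear_scale[OF bounded_linear.linear[OF blL]] by simp
  finally have nv2: "norm v = integral\<^sup>L M (\<lambda>x. indicator A x * L (Z x))" .
  have intLZ: "integrable M (\<lambda>x. L (Z x))" using integrable_bounded_linear[OF blL assms(3)] .
  have intgZ: "integrable M (\<lambda>x. g (Z x))" using integrable_bounded_linear[OF bl assms(3)] .
  have gZm: "(\<lambda>x. g (Z x)) \<in> borel_measurable M" using intgZ by auto
  have int1: "integrable M (\<lambda>x. indicator A x * L (Z x))"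
    using integrable_real_mult_indicator[OF Ameas intLZ] by (simp add: mult.commute)
  have intZi: "integrable M (\<lambda>x. Z x $ i)"
    using integrable_bounded_linear[OF bounded_linear_vec_nth assms(3)] .
  have int2: "integrable M (\<lambda>x. max (L (Z x) - \<theta>) 0)"
    using intLZ by auto
  have int3: "integrable M (\<lambda>x. \<theta> * indicator A x)"
    using Ameas by (intro integrable_mult_right) (simp add: emeasure_eq_measure)
  have "norm v \<le> integral\<^sup>L M (\<lambda>x. \<theta> * indicator A x + max (L (Z x) - \<theta>) 0)"
    unfolding nv2
    by (rule integral_mono[OF int1 Bochner_Integration.integrable_add[OF int3 int2]])
       (auto split: split_indicator)
  also have "\<dots> = \<theta> * measure M A + integral\<^sup>L M (\<lambda>x. max (L (Z x) - \<theta>) 0)"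
    using int2 int3 Ameas by simp
  also have "integral\<^sup>L M (\<lambda>x. max (L (Z x) - \<theta>) 0) = integral\<^sup>L M (\<lambda>x. max (Z x $ i - \<theta>) 0)"
  proof -
    define h where "h = (\<lambda>y::real^'n. max (y $ i - \<theta>) 0)"
    have hm: "h \<in> borel_measurable borel" unfolding h_def by measurable
    have "integral\<^sup>L M (\<lambda>x. h (g (Z x))) = integral\<^sup>L (distr M borel (\<lambda>x. g (Z x))) h"
      by (rule integral_distr[symmetric, OF gZm hm])
    also have "\<dots> = integral\<^sup>L (distr M borel Z) h" using assms(4)[OF g(1)] by simp
    also have "\<dots> = integral\<^sup>L M (\<lambda>x. h (Z x))" by (rule integral_distr[OF assms(2) hm])
    finally show ?thesis unfolding h_def L_def .
  qed
  finally have le: "norm v \<le> \<theta> * measure M A + integral\<^sup>L M (\<lambda>x. max (Z x $ i - \<theta>) 0)" .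
  have "(norm v)^2 \<le> (\<theta> * measure M A + integral\<^sup>L M (\<lambda>x. max (Z x $ i - \<theta>) 0))^2"
    using le by (intro power_mono) auto
  then show ?thesis unfolding v_def A_def .
qed

end
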